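(* Let $(X_i)_{i\in\mathbb{Z}}$ be i.i.d. nonnegative with $\mathbb{E}X_i=1$ and $\mathbb{E}X_i^\gamma<\infty$ for some $\gamma\ge2$. Then for every $t<1$ the stationary sequence $(\min\{T_i,t\})_{i\in\mathbb{Z}}$ is strongly mixing, and its strong mixing coefficients satisfy $\alpha(k)=o(k^{2-\gamma})$ as $k\to\infty$.
   Context: For a stationary sequence $(\xi_i)_{i\in\mathbb{Z}}$, $\alpha(k):=\sup_{A\in\mathcal{F}_{-\infty}^0,B\in\mathcal{F}_k^\infty}|\mathbb{P}(AB)-\mathbb{P}(A)\mathbb{P}(B)|$ with $\mathcal{F}_{-\infty}^0=\sigma(\xi_0,\xi_{-1},\dots)$, $\mathcal{F}_k^\infty=\sigma(\xi_k,\xi_{k+1},\dots)$; the sequence is strongly mixing if $\alpha(k)\to0$. For $p,q\ge1$, $j\in\mathbb{Z}$, $s\ge0$: $F_{p,j,q}(s)=\frac1p\sum_{i=1}^{p-1}(p-i)X_{j+i+1}+\frac1q\sum_{i=1}^{q-1}(q-i)X_{j-i+1}+X_{j+1}-\frac{p+q}{2}s^2$ (empty sums are $0$); $T_j:=\inf_{k,l\ge1}\{s\ge0:F_{k,j,l}(s)=0\}$. *)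

theory Defs
  imports "HOL-Probability.Probability" "HOL-Library.Landau_Symbols"
begin

definition Ffun :: "(int \<Rightarrow> real) \<Rightarrow> nat \<Rightarrow> int \<Rightarrow> nat \<Rightarrow> real \<Rightarrow> real" where
  "Ffun x p j q s =
     (1 / real p) * (\<Sum>i\<in>{1..<p}. real (p - i) * x (j + int i + 1))
   + (1 / real q) * (\<Sum>i\<in>{1..<q}. real (q - i) * x (j - int i + 1))
   + x (j + 1) - (real p + real q) / 2 * s\<^sup>2"

definition Tfun :: "(int \<Rightarrow> real) \<Rightarrow> int \<Rightarrow> real" where
  "Tfun x j = Inf {s. \<exists>k l. k \<ge> 1 \<and> l \<ge> 1 \<and> s \<ge> 0 \<and> Ffun x k j l s = 0}"

definition gen_sets :: "'a measure \<Rightarrow> (int \<Rightarrow> 'a \<Rightarrow> real) \<Rightarrow> int set \<Rightarrow> 'a set set" where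
  "gen_sets M Y I = sigma_sets (space M) {Y i -` B \<inter> space M | i B. i \<in> I \<and> B \<in> sets borel}"

definition mixing_coeff :: "'a measure \<Rightarrow> (int \<Rightarrow> 'a \<Rightarrow> real) \<Rightarrow> int \<Rightarrow> real" where
  "mixing_coeff M Y k =
     (SUP p \<in> gen_sets M Y {..0} \<times> gen_sets M Y {k..}.
        \<bar>measure M (fst p \<inter> snd p) - measure M (fst p) * measure M (snd p)\<bar>)"

end

theory Submission
  imports Defs
begin


definition Aval :: "(int \<Rightarrow> real) \<Rightarrow> int \<Rightarrow> nat \<Rightarrow> nat \<Rightarrow> real" where
  "Aval x j p q = Ffun x p j q 0"

definition rt :: "(int \<Rightarrow> real) \<Rightarrow> int \<Rightarrow> nat \<Rightarrow> nat \<Rightarrow> real" where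
  "rt x j p q = sqrt (2 * Aval x j p q / (real p + real q))"

definition KK :: "(nat \<times> nat) set" where "KK = {pq. fst pq \<ge> 1 \<and> snd pq \<ge> 1}"

lemma Aval_nonneg: assumes "\<And>n. x n \<ge> 0" shows "Aval x j p q \<ge> 0"
proof -
  have "0 \<le> 1 / real p * (\<Sum>i = 1..<p. real (p - i) * x (j + int i + 1))"
    using assms by (intro mult_nonneg_nonneg sum_nonneg) auto
  moreover have "0 \<le> 1 / real q * (\<Sum>i = 1..<q. real (q - i) * x (j - int i + 1))"
    using assms by (intro mult_nonneg_nonneg sum_nonneg) auto
  ultimately show ?thesis unfolding Aval_def Ffun_def using assms[of "j+1"] by simp
qed

lemma Ffun_Aval: "Ffun x p j q s = Aval x j p q - (real p + real q) / 2 * s\<^sup>2"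
  unfolding Aval_def Ffun_def by simp

lemma rt_nonneg: "(\<And>n. x n \<ge> 0) \<Longrightarrow> rt x j p q \<ge> 0"
  unfolding rt_def using Aval_nonneg[of x j p q] by auto

lemma Tfun_set: assumes "\<And>n. x n \<ge> 0"
  shows "{s. \<exists>k l. k \<ge> 1 \<and> l \<ge> 1 \<and> s \<ge> 0 \<and> Ffun x k j l s = 0} = (\<lambda>pq. rt x j (fst pq) (snd pq)) ` KK"
proof (intro set_eqI iffI)
  fix s assume "s \<in> {s. \<exists>k l. k \<ge> 1 \<and> l \<ge> 1 \<and> s \<ge> 0 \<and> Ffun x k j l s = 0}"
  then obtain k l where kl: "k \<ge> 1" "l \<ge> 1" "s \<ge> 0" "Ffun x k j l s = 0" by auto
  have pos: "real k + real l > 0" using kl by auto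
  have "s\<^sup>2 = 2 * Aval x j k l / (real k + real l)"
    using kl(4) pos unfolding Ffun_Aval by (simp add: field_simps)
  hence "s = rt x j k l" unfolding rt_def using kl(3) by (metis real_sqrt_unique)
  thus "s \<in> (\<lambda>pq. rt x j (fst pq) (snd pq)) ` KK" using kl unfolding KK_def
    by (intro image_eqI[where x="(k,l)"]) auto
next
  fix s assume "s \<in> (\<lambda>pq. rt x j (fst pq) (snd pq)) ` KK"
  then obtain k l where kl: "k \<ge> 1" "l \<ge> 1" "s = rt x j k l" unfolding KK_def by auto
  have pos: "real k + real l > 0" using kl by auto
  have A: "Aval x j k l \<ge> 0" using Aval_nonneg assms by blast
  have "s\<^sup>2 = 2 * Aval x j k l / (real k + real l)" using kl A pos unfolding rt_def by simp
  hence "Ffun x k j l s = 0" unfolding Ffun_Aval using pos by (simp add: field_simps)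
  thus "s \<in> {s. \<exists>k l. k \<ge> 1 \<and> l \<ge> 1 \<and> s \<ge> 0 \<and> Ffun x k j l s = 0}"
    using kl rt_nonneg[OF assms] by auto
qed

lemma Tfun_eq: assumes "\<And>n. x n \<ge> 0"
  shows "Tfun x j = (INF pq\<in>KK. rt x j (fst pq) (snd pq))"
  unfolding Tfun_def Tfun_set[OF assms] ..

lemma countable_KK: "countable KK" by simp

lemma Aval_meas[measurable]: "(\<lambda>x. Aval x j p q) \<in> borel_measurable (Pi\<^sub>M UNIV (\<lambda>_. borel))"
  unfolding Aval_def Ffun_def by measurable



locale mixset = prob_space M for M :: "'a measure" +
  fixes X :: "int \<Rightarrow> 'a \<Rightarrow> real" and \<gamma> t :: real
  assumes Xmeas[measurable]: "\<And>i. X i \<in> borel_measurable M"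
    and indep: "indep_vars (\<lambda>_. borel) X UNIV"
    and ident: "\<And>i. distr M borel (X i) = distr M borel (X 0)"
    and Xnn: "\<And>i \<omega>. \<omega> \<in> space M \<Longrightarrow> X i \<omega> \<ge> 0"
    and int1: "integrable M (X 0)" and mean1: "integral\<^sup>L M (X 0) = 1"
    and g2: "\<gamma> \<ge> 2" and intg: "integrable M (\<lambda>\<omega>. X 0 \<omega> powr \<gamma>)"
    and tl: "t < 1"
begin

definition Y :: "int \<Rightarrow> 'a \<Rightarrow> real" where "Y = (\<lambda>i \<omega>. min (Tfun (\<lambda>n. X n \<omega>) i) t)"

definition Gv :: "(int \<Rightarrow> real) \<Rightarrow> int \<Rightarrow> real" where
  "Gv x = (\<lambda>i. min (INF pq\<in>KK. rt (\<lambda>n. max (x n) 0) i (fst pq) (snd pq)) t)"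

lemma Gv_meas: "Gv \<in> measurable (Pi\<^sub>M UNIV (\<lambda>_. borel)) (Pi\<^sub>M UNIV (\<lambda>_. borel))"
  unfolding Gv_def
proof (rule measurable_PiM_single')
  fix i :: int
  have "(\<lambda>x. INF pq\<in>KK. rt (\<lambda>n. max (x n) 0) i (fst pq) (snd pq)) \<in> borel_measurable (Pi\<^sub>M UNIV (\<lambda>_. borel))"
    unfolding rt_def Aval_def Ffun_def by (intro borel_measurable_cINF_real countable_KK) measurable
  then show "(\<lambda>x. min (INF pq\<in>KK. rt (\<lambda>n. max (x n) 0) i (fst pq) (snd pq)) t) \<in> borel_measurable (Pi\<^sub>M UNIV (\<lambda>_. borel))"
    by measurable
qed auto

lemma Ffun_shift: "Ffun x p (j+1) q s = Ffun (\<lambda>n. x (n+1)) p j q s"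
  unfolding Ffun_def by (simp add: algebra_simps)

lemma Tfun_shift: "Tfun x (j+1) = Tfun (\<lambda>n. x (n+1)) j"
  unfolding Tfun_def Ffun_shift ..

lemma Y_Gv: "\<omega> \<in> space M \<Longrightarrow> Y i \<omega> = Gv (\<lambda>n. X n \<omega>) i"
  unfolding Y_def Gv_def using Xnn by (simp add: Tfun_eq max_absorb1)

lemma Y_Gv_shift: "\<omega> \<in> space M \<Longrightarrow> Y (i+1) \<omega> = Gv (\<lambda>n. X (n+1) \<omega>) i"
  unfolding Y_def Gv_def using Xnn by (simp add: Tfun_shift Tfun_eq max_absorb1)

lemma indep_shift: "indep_vars (\<lambda>_. borel) (\<lambda>i. X (i+1)) UNIV"
proof -
  have ind: "indep_sets (\<lambda>i. {X i -` A \<inter> space M | A. A \<in> sets borel}) UNIV"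
    using indep unfolding indep_vars_def2 by auto
  have "indep_sets (\<lambda>i. {X (i+1) -` A \<inter> space M | A. A \<in> sets borel}) UNIV"
  proof (rule indep_setsI)
    show "{X (i+1) -` A \<inter> space M | A. A \<in> sets borel} \<subseteq> events" for i by auto
    fix A J assume J: "J \<noteq> {}" "J \<subseteq> (UNIV::int set)" "finite J"
      and A: "\<forall>j\<in>J. A j \<in> {X (j+1) -` A \<inter> space M | A. A \<in> sets borel}"
    have inj: "inj_on (\<lambda>j. j+1) J" by (auto simp: inj_on_def)
    have "prob (\<Inter>n\<in>(\<lambda>j. j+1)`J. A (n-1)) = (\<Prod>n\<in>(\<lambda>j. j+1)`J. prob (A (n-1)))"
      by (rule indep_setsD[OF ind]) (use J A in auto)
    moreover have "(\<Inter>n\<in>(\<lambda>j. j+1)`J. A (n-1)) = (\<Inter>j\<in>J. A j)" by auto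
    moreover have "(\<Prod>n\<in>(\<lambda>j. j+1)`J. prob (A (n-1))) = (\<Prod>j\<in>J. prob (A j))"
      by (subst prod.reindex[OF inj]) auto
    ultimately show "prob (\<Inter>j\<in>J. A j) = (\<Prod>j\<in>J. prob (A j))" by simp
  qed
  thus ?thesis unfolding indep_vars_def2 by auto
qed

lemma law: "distr M (Pi\<^sub>M UNIV (\<lambda>_. borel)) (\<lambda>\<omega> n. X n \<omega>) = Pi\<^sub>M UNIV (\<lambda>_. distr M borel (X 0))"
proof -
  have "distr M (Pi\<^sub>M UNIV (\<lambda>_. borel)) (\<lambda>x. \<lambda>i\<in>UNIV. X i x) = (Pi\<^sub>M UNIV (\<lambda>i. distr M borel (X i)))"
    using indep_vars_iff_distr_eq_PiM[where I=UNIV and M'="\<lambda>_. borel" and X=X] indep by auto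
  also have "\<dots> = Pi\<^sub>M UNIV (\<lambda>_. distr M borel (X 0))" using ident by (intro PiM_cong) auto
  finally show ?thesis by (simp add: restrict_def)
qed

lemma law_shift: "distr M (Pi\<^sub>M UNIV (\<lambda>_. borel)) (\<lambda>\<omega> n. X (n+1) \<omega>) = Pi\<^sub>M UNIV (\<lambda>_. distr M borel (X 0))"
proof -
  have "distr M (Pi\<^sub>M UNIV (\<lambda>_. borel)) (\<lambda>x. \<lambda>i\<in>UNIV. X (i+1) x) = (Pi\<^sub>M UNIV (\<lambda>i. distr M borel (X (i+1))))"
    using indep_vars_iff_distr_eq_PiM[where I=UNIV and M'="\<lambda>_. borel" and X="\<lambda>i. X (i+1)"] indep_shift by auto
  also have "\<dots> = Pi\<^sub>M UNIV (\<lambda>_. distr M borel (X 0))" using ident by (intro PiM_cong) auto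
  finally show ?thesis by (simp add: restrict_def)
qed

lemma stationary: "distr M (Pi\<^sub>M UNIV (\<lambda>_. borel)) (\<lambda>\<omega> i. Y (i + 1) \<omega>)
             = distr M (Pi\<^sub>M UNIV (\<lambda>_. borel)) (\<lambda>\<omega> i. Y i \<omega>)"
proof -
  have m1: "(\<lambda>\<omega> n. X (n+1) \<omega>) \<in> measurable M (Pi\<^sub>M UNIV (\<lambda>_. borel))"
    by (rule measurable_PiM_single') auto
  have m0: "(\<lambda>\<omega> n. X n \<omega>) \<in> measurable M (Pi\<^sub>M UNIV (\<lambda>_. borel))"
    by (rule measurable_PiM_single') auto
  have "distr M (Pi\<^sub>M UNIV (\<lambda>_. borel)) (\<lambda>\<omega> i. Y (i + 1) \<omega>)
      = distr M (Pi\<^sub>M UNIV (\<lambda>_. borel)) (\<lambda>\<omega>. Gv (\<lambda>n. X (n+1) \<omega>))"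
    by (intro distr_cong) (auto simp: Y_Gv_shift)
  also have "\<dots> = distr (distr M (Pi\<^sub>M UNIV (\<lambda>_. borel)) (\<lambda>\<omega> n. X (n+1) \<omega>)) (Pi\<^sub>M UNIV (\<lambda>_. borel)) Gv"
    using distr_distr[OF Gv_meas m1] by (simp add: comp_def)
  also have "\<dots> = distr (distr M (Pi\<^sub>M UNIV (\<lambda>_. borel)) (\<lambda>\<omega> n. X n \<omega>)) (Pi\<^sub>M UNIV (\<lambda>_. borel)) Gv"
    unfolding law law_shift ..
  also have "\<dots> = distr M (Pi\<^sub>M UNIV (\<lambda>_. borel)) (\<lambda>\<omega>. Gv (\<lambda>n. X n \<omega>))"
    using distr_distr[OF Gv_meas m0] by (simp add: comp_def)
  also have "\<dots> = distr M (Pi\<^sub>M UNIV (\<lambda>_. borel)) (\<lambda>\<omega> i. Y i \<omega>)"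
    by (intro distr_cong) (auto simp: Y_Gv)
  finally show ?thesis .
qed

end


definition wt :: "int \<Rightarrow> nat \<Rightarrow> nat \<Rightarrow> int \<Rightarrow> real" where
  "wt j p q n = (if n \<ge> j+1 then (real p - real_of_int (n-j-1)) / real p
                 else (real q - real_of_int (j+1-n)) / real q)"

definition II :: "int \<Rightarrow> nat \<Rightarrow> nat \<Rightarrow> int set" where "II j p q = {j - int q + 2 .. j + int p}"

lemma reindR: "(\<Sum>i\<in>{1..<p}. f (j + int i + 1)) = (\<Sum>n\<in>{j+2..j+int p}. f n)"
proof -
  have inj: "inj_on (\<lambda>i. j + int i + 1) {1..<p}" by (auto simp: inj_on_def)
  have img: "(\<lambda>i. j + int i + 1) ` {1..<p} = {j+2..j+int p}"
  proof (intro set_eqI iffI)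
    fix n assume "n \<in> {j+2..j+int p}"
    then show "n \<in> (\<lambda>i. j + int i + 1) ` {1..<p}"
      by (intro image_eqI[where x="nat (n-j-1)"]) auto
  qed auto
  show ?thesis using sum.reindex[OF inj, of f] img by (simp add: comp_def)
qed

lemma reindL: "(\<Sum>i\<in>{1..<q}. f (j - int i + 1)) = (\<Sum>n\<in>{j - int q + 2..j}. f n)"
proof -
  have inj: "inj_on (\<lambda>i. j - int i + 1) {1..<q}" by (auto simp: inj_on_def)
  have img: "(\<lambda>i. j - int i + 1) ` {1..<q} = {j - int q + 2..j}"
  proof (intro set_eqI iffI)
    fix n assume "n \<in> {j - int q + 2..j}"
    then show "n \<in> (\<lambda>i. j - int i + 1) ` {1..<q}"
      by (intro image_eqI[where x="nat (j+1-n)"]) auto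
  qed auto
  show ?thesis using sum.reindex[OF inj, of f] img by (simp add: comp_def)
qed

lemma Aval_repr: assumes "p \<ge> 1" "q \<ge> 1"
  shows "Aval x j p q = (\<Sum>n\<in>II j p q. wt j p q n * x n)"
proof -
  have R: "1 / real p * (\<Sum>i\<in>{1..<p}. real (p - i) * x (j + int i + 1))
        = (\<Sum>n\<in>{j+2..j+int p}. wt j p q n * x n)"
  proof -
    have "1 / real p * (\<Sum>i\<in>{1..<p}. real (p - i) * x (j + int i + 1))
       = (\<Sum>i\<in>{1..<p}. wt j p q (j + int i + 1) * x (j + int i + 1))"
      unfolding sum_distrib_left by (intro sum.cong) (auto simp: wt_def of_nat_diff)
    also have "\<dots> = (\<Sum>n\<in>{j+2..j+int p}. wt j p q n * x n)" by (rule reindR)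
    finally show ?thesis .
  qed
  have L: "1 / real q * (\<Sum>i\<in>{1..<q}. real (q - i) * x (j - int i + 1))
        = (\<Sum>n\<in>{j - int q + 2..j}. wt j p q n * x n)"
  proof -
    have "1 / real q * (\<Sum>i\<in>{1..<q}. real (q - i) * x (j - int i + 1))
       = (\<Sum>i\<in>{1..<q}. wt j p q (j - int i + 1) * x (j - int i + 1))"
      unfolding sum_distrib_left by (intro sum.cong) (auto simp: wt_def of_nat_diff)
    also have "\<dots> = (\<Sum>n\<in>{j - int q + 2..j}. wt j p q n * x n)" by (rule reindL)
    finally show ?thesis .
  qed
  have M: "wt j p q (j+1) = 1" using assms by (simp add: wt_def)
  have split: "II j p q = {j - int q + 2..j} \<union> ({j+1} \<union> {j+2..j+int p})" unfolding II_def using assms by auto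
  have "(\<Sum>n\<in>II j p q. wt j p q n * x n) = (\<Sum>n\<in>{j - int q + 2..j}. wt j p q n * x n)
      + (wt j p q (j+1) * x (j+1) + (\<Sum>n\<in>{j+2..j+int p}. wt j p q n * x n))"
    unfolding split by (subst sum.union_disjoint; auto)+
  then show ?thesis unfolding Aval_def Ffun_def R L M by simp
qed

lemma wt_bounds: assumes "p \<ge> 1" "q \<ge> 1" "n \<in> II j p q"
  shows "0 \<le> wt j p q n" "wt j p q n \<le> 1"
  using assms unfolding wt_def II_def by (auto simp: field_simps)

lemma gauss_real0: "(\<Sum>i\<in>{1..<p}. real p - real i) = real p * (real p - 1) / 2"
proof (induction p)
  case 0 then show ?case by simp
next
  case (Suc p)
  show ?case
  proof (cases "p = 0")
    case True then show ?thesis by simp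
  next
    case False
    have e: "{1..<Suc p} = insert p {1..<p}" using False by auto
    have "(\<Sum>i\<in>{1..<Suc p}. real (Suc p) - real i) = (\<Sum>i\<in>{1..<p}. real (Suc p) - real i) + 1"
      unfolding e by (subst sum.insert) auto
    also have "(\<Sum>i\<in>{1..<p}. real (Suc p) - real i) = (\<Sum>i\<in>{1..<p}. (real p - real i) + 1)"
      by (intro sum.cong) auto
    also have "\<dots> = (\<Sum>i\<in>{1..<p}. real p - real i) + (real p - 1)"
      using False by (simp add: sum.distrib of_nat_diff)
    finally show ?thesis using Suc.IH by (simp add: field_simps)
  qed
qed

lemma gauss_real: "(\<Sum>i\<in>{1..<p}. real (p - i)) = real p * (real p - 1) / 2"
proof -
  have "(\<Sum>i\<in>{1..<p}. real (p - i)) = (\<Sum>i\<in>{1..<p}. real p - real i)"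
    by (intro sum.cong) (auto simp: of_nat_diff)
  then show ?thesis using gauss_real0 by simp
qed

lemma wt_sum: assumes "p \<ge> 1" "q \<ge> 1"
  shows "(\<Sum>n\<in>II j p q. wt j p q n) = (real p + real q) / 2"
proof -
  have "(\<Sum>n\<in>II j p q. wt j p q n) = Aval (\<lambda>_. 1) j p q"
    using Aval_repr[OF assms, of "\<lambda>_. 1" j] by simp
  also have "\<dots> = (real p + real q) / 2"
    unfolding Aval_def Ffun_def using assms by (simp only: gauss_real mult_1_right) (simp add: field_simps)
  finally show ?thesis .
qed



lemma exp_neg_le: assumes "(y::real) \<ge> 0" shows "exp (-y) \<le> 1 - y + y\<^sup>2 / 2"
proof -
  let ?f = "\<lambda>y::real. 1 - y + y\<^sup>2 / 2 - exp (-y)"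
  have d: "\<And>z. (?f has_real_derivative (-1 + z + exp (-z))) (at z)"
    by (auto intro!: derivative_eq_intros simp: power2_eq_square)
  have "?f 0 \<le> ?f y"
  proof (rule DERIV_nonneg_imp_nondecreasing[OF assms])
    fix z assume "0 \<le> z" "z \<le> y"
    have "1 + (-z) \<le> exp (-z)" by (rule exp_ge_add_one_self)
    then show "\<exists>d. (?f has_real_derivative d) (at z) \<and> 0 \<le> d"
      using d[of z] by (intro exI[of _ "-1 + z + exp (-z)"]) auto
  qed
  then show ?thesis by simp
qed

context mixset begin

definition m2 :: real where "m2 = (\<integral>\<omega>. (X 0 \<omega>)\<^sup>2 \<partial>M)"
definition BB :: real where "BB = m2 + 1"

lemma X2_int: "integrable M (\<lambda>\<omega>. (X 0 \<omega>)\<^sup>2)"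
proof -
  have i: "integrable M (\<lambda>\<omega>. 1 + X 0 \<omega> powr \<gamma>)" using intg by auto
  show ?thesis
proof (rule Bochner_Integration.integrable_bound[OF i])
  show "(\<lambda>\<omega>. (X 0 \<omega>)\<^sup>2) \<in> borel_measurable M" by measurable
  show "AE \<omega> in M. norm ((X 0 \<omega>)\<^sup>2) \<le> norm (1 + X 0 \<omega> powr \<gamma>)"
  proof (rule AE_I2)
    fix \<omega> assume w: "\<omega> \<in> space M"
    have x0: "X 0 \<omega> \<ge> 0" using Xnn[OF w] .
    have "(X 0 \<omega>)\<^sup>2 \<le> 1 + X 0 \<omega> powr \<gamma>"
    proof (cases "X 0 \<omega> \<le> 1")
      case True
      then have "(X 0 \<omega>)\<^sup>2 \<le> 1" using x0 by (simp add: power_le_one)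
      then show ?thesis by (smt (verit) powr_ge_zero)
    next
      case False
      then have "(X 0 \<omega>)\<^sup>2 = X 0 \<omega> powr 2" using x0 by (simp add: powr_numeral)
      also have "\<dots> \<le> X 0 \<omega> powr \<gamma>" using False g2 by (intro powr_mono) auto
      finally show ?thesis by simp
    qed
    then show "norm ((X 0 \<omega>)\<^sup>2) \<le> norm (1 + X 0 \<omega> powr \<gamma>)" by simp
  qed
qed
qed

lemma m2_nonneg: "m2 \<ge> 0" unfolding m2_def by (intro integral_nonneg_AE) auto

lemma BB_pos: "BB > 0" using m2_nonneg unfolding BB_def by simp

lemma eqdist: fixes g :: "real \<Rightarrow> real" assumes [measurable]: "g \<in> borel_measurable borel"
  shows "(\<integral>\<omega>. g (X n \<omega>) \<partial>M) = (\<integral>\<omega>. g (X 0 \<omega>) \<partial>M)"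
proof -
  have "(\<integral>\<omega>. g (X n \<omega>) \<partial>M) = integral\<^sup>L (distr M borel (X n)) g"
    using integral_distr[of "X n" M borel g] by simp
  also have "\<dots> = integral\<^sup>L (distr M borel (X 0)) g" by (simp only: ident[of n])
  also have "\<dots> = (\<integral>\<omega>. g (X 0 \<omega>) \<partial>M)" using integral_distr[of "X 0" M borel g] by simp
  finally show ?thesis .
qed

lemma exp_int: assumes "u \<ge> 0" shows "integrable M (\<lambda>\<omega>. exp (- u * X n \<omega>))"
proof (rule integrable_const_bound[where B=1])
  show "AE \<omega> in M. norm (exp (- u * X n \<omega>)) \<le> 1"
    using Xnn assms by (intro AE_I2) (auto simp: mult_nonneg_nonneg)
qed measurable

lemma laplace0: assumes "u \<ge> 0"
  shows "(\<integral>\<omega>. exp (- u * X 0 \<omega>) \<partial>M) \<le> exp (- u + u\<^sup>2 * m2 / 2)"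
proof -
  have "(\<integral>\<omega>. exp (- u * X 0 \<omega>) \<partial>M) \<le> (\<integral>\<omega>. 1 - u * X 0 \<omega> + u\<^sup>2 / 2 * (X 0 \<omega>)\<^sup>2 \<partial>M)"
  proof (rule integral_mono)
    show "integrable M (\<lambda>\<omega>. exp (- u * X 0 \<omega>))" by (rule exp_int[OF assms])
    show "integrable M (\<lambda>\<omega>. 1 - u * X 0 \<omega> + u\<^sup>2 / 2 * (X 0 \<omega>)\<^sup>2)"
      using int1 X2_int by auto
    fix \<omega> assume w: "\<omega> \<in> space M"
    have "exp (- (u * X 0 \<omega>)) \<le> 1 - u * X 0 \<omega> + (u * X 0 \<omega>)\<^sup>2 / 2"
      using Xnn[OF w] assms by (intro exp_neg_le) auto
    then show "exp (- u * X 0 \<omega>) \<le> 1 - u * X 0 \<omega> + u\<^sup>2 / 2 * (X 0 \<omega>)\<^sup>2"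
      by (simp add: power_mult_distrib)
  qed
  also have "\<dots> = 1 - u + u\<^sup>2 * m2 / 2"
    using int1 X2_int mean1 unfolding m2_def by (simp add: prob_space)
  also have "\<dots> \<le> exp (- u + u\<^sup>2 * m2 / 2)" using exp_ge_add_one_self[of "u\<^sup>2 * m2 / 2 - u"] by (simp add: algebra_simps)
  finally show ?thesis .
qed

lemma laplace: assumes "u \<ge> 0"
  shows "(\<integral>\<omega>. exp (- u * X n \<omega>) \<partial>M) \<le> exp (- u + u\<^sup>2 * m2 / 2)"
  using eqdist[of "\<lambda>x. exp (- u * x)" n] laplace0[OF assms] by simp

end


context mixset begin

lemma rt_meas[measurable]: "(\<lambda>\<omega>. rt (\<lambda>n. X n \<omega>) j p q) \<in> borel_measurable M"
  unfolding rt_def Aval_def Ffun_def by measurable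

lemma Aval_meas'[measurable]: "(\<lambda>\<omega>. Aval (\<lambda>n. X n \<omega>) j p q) \<in> borel_measurable M"
  unfolding Aval_def Ffun_def by measurable

lemma sqrt_less_sq: assumes "sqrt x < (\<tau>::real)" "x \<ge> 0" shows "x < \<tau>\<^sup>2"
proof -
  have "(sqrt x)\<^sup>2 < \<tau>\<^sup>2" using assms by (intro power_strict_mono) auto
  then show ?thesis using assms by simp
qed

lemma chernoff:
  assumes tau: "0 \<le> \<tau>" "\<tau> < 1" and pq: "p \<ge> 1" "q \<ge> 1"
  shows "prob {\<omega>\<in>space M. rt (\<lambda>n. X n \<omega>) j p q < \<tau>} \<le> exp (- ((1-\<tau>\<^sup>2)\<^sup>2/(4*BB)) * (real p + real q))"
proof -
  define N where "N = real p + real q"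
  define lam where "lam = (1-\<tau>\<^sup>2)/BB"
  define a where "a = \<tau>\<^sup>2 * N / 2"
  define S where "S = {\<omega>\<in>space M. rt (\<lambda>n. X n \<omega>) j p q < \<tau>}"
  have Npos: "N > 0" using pq unfolding N_def by auto
  have t2: "\<tau>\<^sup>2 < 1" using tau mult_left_le_one_le[of \<tau> \<tau>] by (simp add: power2_eq_square)
  have lam0: "lam \<ge> 0" using BB_pos t2 unfolding lam_def by auto
  have Smeas[measurable]: "S \<in> sets M" unfolding S_def by measurable
  have Ann: "\<And>\<omega>. \<omega> \<in> space M \<Longrightarrow> Aval (\<lambda>n. X n \<omega>) j p q \<ge> 0"
    by (rule Aval_nonneg) (rule Xnn)
  have key1: "Aval (\<lambda>n. X n \<omega>) j p q < a" if w: "\<omega> \<in> S" for \<omega>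
  proof -
    have sp: "\<omega> \<in> space M" using w unfolding S_def by auto
    have "2 * Aval (\<lambda>n. X n \<omega>) j p q / N < \<tau>\<^sup>2"
      using w Ann[OF sp] Npos unfolding S_def rt_def N_def by (intro sqrt_less_sq) auto
    then show ?thesis using Npos unfolding a_def by (simp add: field_simps)
  qed
  have ind: "indicator S \<omega> \<le> exp (lam * (a - Aval (\<lambda>n. X n \<omega>) j p q))" if "\<omega> \<in> space M" for \<omega>
  proof (cases "\<omega> \<in> S")
    case True
    then have "0 \<le> lam * (a - Aval (\<lambda>n. X n \<omega>) j p q)" using key1[OF True] lam0 by auto
    then show ?thesis using True by auto
  qed auto
  have intE: "integrable M (\<lambda>\<omega>. exp (lam * (a - Aval (\<lambda>n. X n \<omega>) j p q)))"
  proof (rule integrable_const_bound[where B="exp (lam * a)"])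
    show "AE \<omega> in M. norm (exp (lam * (a - Aval (\<lambda>n. X n \<omega>) j p q))) \<le> exp (lam * a)"
    proof (rule AE_I2)
      fix \<omega> assume "\<omega> \<in> space M"
      then have "lam * (a - Aval (\<lambda>n. X n \<omega>) j p q) \<le> lam * a"
        using Ann lam0 by (simp add: mult_left_mono)
      then show "norm (exp (lam * (a - Aval (\<lambda>n. X n \<omega>) j p q))) \<le> exp (lam * a)" by simp
    qed
  qed measurable
  have "prob S = (\<integral>\<omega>. indicator S \<omega> \<partial>M)" by simp
  also have "\<dots> \<le> (\<integral>\<omega>. exp (lam * (a - Aval (\<lambda>n. X n \<omega>) j p q)) \<partial>M)"
  proof (rule integral_mono[OF _ intE])
    show "integrable M (indicator S :: 'a \<Rightarrow> real)"
      by (rule integrable_real_indicator[OF Smeas]) (simp add: less_top[symmetric])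
  qed (use ind in auto)
  also have "\<dots> = (\<integral>\<omega>. exp (lam * a) * (\<Prod>n\<in>II j p q. exp (- (lam * wt j p q n) * X n \<omega>)) \<partial>M)"
  proof (rule Bochner_Integration.integral_cong[OF refl])
    fix \<omega>
    have "exp (lam * (a - Aval (\<lambda>n. X n \<omega>) j p q)) = exp (lam * a + (\<Sum>n\<in>II j p q. - (lam * wt j p q n) * X n \<omega>))"
      unfolding Aval_repr[OF pq] by (simp add: sum_distrib_left right_diff_distrib sum_negf mult.assoc)
    also have "\<dots> = exp (lam * a) * (\<Prod>n\<in>II j p q. exp (- (lam * wt j p q n) * X n \<omega>))"
      unfolding exp_add by (simp add: exp_sum II_def)
    finally show "exp (lam * (a - Aval (\<lambda>n. X n \<omega>) j p q)) = exp (lam * a) * (\<Prod>n\<in>II j p q. exp (- (lam * wt j p q n) * X n \<omega>))" .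
  qed
  also have "\<dots> = exp (lam * a) * (\<integral>\<omega>. (\<Prod>n\<in>II j p q. exp (- (lam * wt j p q n) * X n \<omega>)) \<partial>M)"
    by simp
  also have "(\<integral>\<omega>. (\<Prod>n\<in>II j p q. exp (- (lam * wt j p q n) * X n \<omega>)) \<partial>M)
      = (\<Prod>n\<in>II j p q. (\<integral>\<omega>. exp (- (lam * wt j p q n) * X n \<omega>) \<partial>M))"
  proof (rule indep_vars_lebesgue_integral)
    show "finite (II j p q)" unfolding II_def by simp
    have "indep_vars (\<lambda>_. borel) X (II j p q)" by (rule indep_vars_subset[OF indep]) auto
    then show "indep_vars (\<lambda>_. borel) (\<lambda>n \<omega>. exp (- (lam * wt j p q n) * X n \<omega>)) (II j p q)"
      by (rule indep_vars_compose2[where Y="\<lambda>n x. exp (- (lam * wt j p q n) * x)"]) auto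
    fix n assume "n \<in> II j p q"
    then show "integrable M (\<lambda>\<omega>. exp (- (lam * wt j p q n) * X n \<omega>))"
      using wt_bounds[OF pq] lam0 by (intro exp_int) auto
  qed
  also have "(\<Prod>n\<in>II j p q. (\<integral>\<omega>. exp (- (lam * wt j p q n) * X n \<omega>) \<partial>M))
      \<le> (\<Prod>n\<in>II j p q. exp (- lam * wt j p q n + lam\<^sup>2 * wt j p q n * BB / 2))"
  proof (rule prod_mono)
    fix n assume n: "n \<in> II j p q"
    have w: "0 \<le> wt j p q n" "wt j p q n \<le> 1" using wt_bounds[OF pq n] by auto
    have "(\<integral>\<omega>. exp (- (lam * wt j p q n) * X n \<omega>) \<partial>M) \<le> exp (- (lam * wt j p q n) + (lam * wt j p q n)\<^sup>2 * m2 / 2)"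
      using w lam0 by (intro laplace) auto
    also have "\<dots> \<le> exp (- lam * wt j p q n + lam\<^sup>2 * wt j p q n * BB / 2)"
    proof -
      have "(wt j p q n)\<^sup>2 \<le> wt j p q n" using w by (simp add: power2_eq_square mult_left_le_one_le)
      moreover have "m2 \<le> BB" unfolding BB_def by simp
      ultimately have "(wt j p q n)\<^sup>2 * m2 \<le> wt j p q n * BB"
        using w m2_nonneg by (intro mult_mono) auto
      then have "lam\<^sup>2 * ((wt j p q n)\<^sup>2 * m2) \<le> lam\<^sup>2 * (wt j p q n * BB)"
        by (intro mult_left_mono) auto
      then show ?thesis by (simp add: power_mult_distrib algebra_simps)
    qed
    finally show "0 \<le> (\<integral>\<omega>. exp (- (lam * wt j p q n) * X n \<omega>) \<partial>M) \<and>
        (\<integral>\<omega>. exp (- (lam * wt j p q n) * X n \<omega>) \<partial>M) \<le> exp (- lam * wt j p q n + lam\<^sup>2 * wt j p q n * BB / 2)"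
      by (auto intro!: integral_nonneg_AE)
  qed
  also have "(\<Prod>n\<in>II j p q. exp (- lam * wt j p q n + lam\<^sup>2 * wt j p q n * BB / 2))
      = exp (\<Sum>n\<in>II j p q. (- lam + lam\<^sup>2 * BB / 2) * wt j p q n)"
    by (subst exp_sum) (auto simp: II_def algebra_simps intro!: prod.cong)
  also have "\<dots> = exp ((- lam + lam\<^sup>2 * BB / 2) * (\<Sum>n\<in>II j p q. wt j p q n))"
    by (simp add: sum_distrib_left)
  also have "(\<Sum>n\<in>II j p q. wt j p q n) = N / 2" using wt_sum[OF pq] unfolding N_def .
  finally have "prob S \<le> exp (lam * a) * exp ((- lam + lam\<^sup>2 * BB / 2) * (N / 2))"
    by (simp add: mult_left_mono)
  also have "\<dots> = exp (- ((1-\<tau>\<^sup>2)\<^sup>2/(4*BB)) * N)"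
    unfolding exp_add[symmetric] using BB_pos unfolding lam_def a_def
    by (simp add: field_simps power2_eq_square)
  finally show ?thesis unfolding S_def N_def .
qed

end


lemma sigma_transfer:
  assumes "A \<in> sigma_sets \<Omega> G"
    and base: "\<And>g. g \<in> G \<Longrightarrow> \<exists>g'\<in>S. g \<inter> D = g' \<inter> D"
    and sa: "sigma_algebra \<Omega> S" and D: "D \<subseteq> \<Omega>"
  shows "\<exists>A'\<in>S. A \<inter> D = A' \<inter> D"
  using assms(1)
proof (induction rule: sigma_sets.induct)
  case (Basic a) then show ?case using base by auto
next
  case Empty then show ?case using sa by (intro bexI[of _ "{}"]) (auto simp: sigma_algebra_iff2)
next
  case (Compl a)
  then obtain a' where a': "a' \<in> S" "a \<inter> D = a' \<inter> D" by auto
  have "\<Omega> - a' \<in> S" using sa a'(1) by (simp add: sigma_algebra_iff2)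
  moreover have "(\<Omega> - a) \<inter> D = (\<Omega> - a') \<inter> D" using a'(2) D by blast
  ultimately show ?case by blast
next
  case (Union a)
  then have "\<forall>i. \<exists>a'. a' \<in> S \<and> a i \<inter> D = a' \<inter> D" by blast
  then obtain f where f: "\<And>i. f i \<in> S" "\<And>i. a i \<inter> D = f i \<inter> D" by metis
  have "(\<Union>i. f i) \<in> S" using sa f(1) by (intro sigma_algebra.countable_UN'') auto
  moreover have "(\<Union>i. a i) \<inter> D = (\<Union>i. f i) \<inter> D" using f(2) by blast
  ultimately show ?case by blast
qed

lemma (in finite_measure) geom_union_bound:
  assumes F: "\<And>i. F i \<in> sets M" and b: "\<And>i. emeasure M (F i) \<le> ennreal (D * r ^ i)"
    and D: "D \<ge> 0" and r: "0 \<le> r" "r < 1"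
  shows "emeasure M (\<Union>i. F i) \<le> ennreal (D / (1 - r))"
proof -
  have "emeasure M (\<Union>i. F i) \<le> (\<Sum>i. emeasure M (F i))"
    using F by (intro emeasure_subadditive_countably) auto
  also have "\<dots> \<le> (\<Sum>i. ennreal (D * r ^ i))"
    using b by (intro suminf_le) auto
  also have "(\<Sum>i. ennreal (D * r ^ i)) = ennreal (D * (1 / (1 - r)))"
    using D r by (intro suminf_ennreal_eq sums_mult geometric_sums) auto
  finally show ?thesis by simp
qed

context mixset begin

lemma rt_meas_gen:
  assumes "\<And>n. n \<in> II i p q \<Longrightarrow> X n \<in> borel_measurable N" "p \<ge> 1" "q \<ge> 1"
  shows "(\<lambda>\<omega>. rt (\<lambda>n. X n \<omega>) i p q) \<in> borel_measurable N"
proof -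
  have "(\<lambda>\<omega>. sqrt (2 * (\<Sum>n\<in>II i p q. wt i p q n * X n \<omega>) / (real p + real q))) \<in> borel_measurable N"
  proof -
    have s[measurable]: "(\<lambda>\<omega>. \<Sum>n\<in>II i p q. wt i p q n * X n \<omega>) \<in> borel_measurable N"
      by (intro borel_measurable_sum borel_measurable_times borel_measurable_const assms(1))
    show ?thesis by measurable
  qed
  then show ?thesis unfolding rt_def Aval_repr[OF assms(2,3)] .
qed

lemma trunc_eq:
  assumes w: "\<omega> \<in> space M" and S: "S \<subseteq> KK" "S \<noteq> {}"
    and big: "\<And>pq. pq \<in> KK - S \<Longrightarrow> rt (\<lambda>n. X n \<omega>) i (fst pq) (snd pq) \<ge> t"
  shows "Y i \<omega> = min (INF pq\<in>S. rt (\<lambda>n. X n \<omega>) i (fst pq) (snd pq)) t"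
proof -
  let ?f = "\<lambda>pq. rt (\<lambda>n. X n \<omega>) i (fst pq) (snd pq)"
  have nn: "\<And>pq. ?f pq \<ge> 0" using Xnn[OF w] by (intro rt_nonneg) auto
  have bdd: "\<And>T. bdd_below (?f ` T)" using nn by (intro bdd_belowI[of _ 0]) auto
  have Y: "Y i \<omega> = min (INF pq\<in>KK. ?f pq) t"
    unfolding Y_def using Xnn[OF w] by (simp add: Tfun_eq)
  show ?thesis
  proof (cases "KK - S = {}")
    case True
    then have "KK = S" using S by auto
    then show ?thesis using Y by simp
  next
    case False
    have KK: "KK = S \<union> (KK - S)" using S by auto
    have "(INF pq\<in>KK. ?f pq) = min (INF pq\<in>S. ?f pq) (INF pq\<in>KK - S. ?f pq)"
      by (subst KK, subst cINF_union) (use S False bdd in \<open>auto simp: inf_min\<close>)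
    moreover have "(INF pq\<in>KK - S. ?f pq) \<ge> t" using False big by (intro cINF_greatest) auto
    ultimately show ?thesis using Y by linarith
  qed
qed

end


context mixset begin

definition tau0 :: real where "tau0 = max t 0"
definition cc :: real where "cc = (1 - tau0\<^sup>2)\<^sup>2 / (4 * BB)"
definition rr :: real where "rr = exp (- cc)"

lemma tau0: "0 \<le> tau0" "tau0 < 1" "t \<le> tau0" using tl unfolding tau0_def by auto

lemma cc_pos: "cc > 0"
proof -
  have "tau0\<^sup>2 < 1" using tau0 mult_left_le_one_le[of tau0 tau0] by (simp add: power2_eq_square)
  then show ?thesis unfolding cc_def using BB_pos by simp
qed

lemma rr: "0 \<le> rr" "rr < 1" unfolding rr_def using cc_pos by auto

lemma bad_bound: assumes "p \<ge> 1" "q \<ge> 1"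
  shows "prob {\<omega>\<in>space M. rt (\<lambda>n. X n \<omega>) j p q < t} \<le> exp (- cc * (real p + real q))"
proof -
  have "prob {\<omega>\<in>space M. rt (\<lambda>n. X n \<omega>) j p q < t} \<le> prob {\<omega>\<in>space M. rt (\<lambda>n. X n \<omega>) j p q < tau0}"
    using tau0(3) by (intro finite_measure_mono) auto
  also have "\<dots> \<le> exp (- cc * (real p + real q))"
    unfolding cc_def using chernoff[OF tau0(1,2) assms] by simp
  finally show ?thesis .
qed

lemma expo: assumes "s \<ge> real m + real a + real b + real c"
  shows "exp (- cc * s) \<le> exp (- cc * real m) * rr ^ a * rr ^ b * rr ^ c"
proof -
  have "exp (- cc * s) \<le> exp (- cc * (real m + real a + real b + real c))"
    using assms cc_pos by simp
  also have "\<dots> = exp (- cc * real m) * rr ^ a * rr ^ b * rr ^ c"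
    unfolding rr_def by (simp add: exp_of_nat_mult[symmetric] exp_add[symmetric] algebra_simps)
  finally show ?thesis .
qed

lemma triple_bound:
  assumes E: "\<And>a b c. E a b c \<in> events"
    and b: "\<And>a b c. prob (E a b c) \<le> C * rr ^ a * rr ^ b * rr ^ c" and C: "C \<ge> 0"
  shows "prob (\<Union>a. \<Union>b. \<Union>c. E a b c) \<le> C / (1 - rr) ^ 3"
proof -
  have r1: "1 - rr > 0" using rr by simp
  have e1: "emeasure M (\<Union>c. E a b c) \<le> ennreal ((C * rr ^ a * rr ^ b) / (1 - rr))" for a b
  proof (rule geom_union_bound)
    fix c show "emeasure M (E a b c) \<le> ennreal (C * rr ^ a * rr ^ b * rr ^ c)"
      using b[of a b c] E[of a b c] by (simp add: emeasure_eq_measure ennreal_leI)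
  qed (use E C rr in auto)
  have e2: "emeasure M (\<Union>b. \<Union>c. E a b c) \<le> ennreal ((C * rr ^ a / (1 - rr)) / (1 - rr))" for a
  proof (rule geom_union_bound)
    fix b show "emeasure M (\<Union>c. E a b c) \<le> ennreal (C * rr ^ a / (1 - rr) * rr ^ b)"
      using e1[of a b] by (simp add: field_simps)
  qed (use E C rr r1 in auto)
  have e3: "emeasure M (\<Union>a. \<Union>b. \<Union>c. E a b c) \<le> ennreal ((C / (1 - rr) / (1 - rr)) / (1 - rr))"
  proof (rule geom_union_bound)
    fix a show "emeasure M (\<Union>b. \<Union>c. E a b c) \<le> ennreal (C / (1 - rr) / (1 - rr) * rr ^ a)"
      using e2[of a] by (simp add: field_simps)
  qed (use E C rr r1 in auto)
  define K where "K = (C / (1 - rr) / (1 - rr)) / (1 - rr)"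
  have K: "K = C / (1 - rr) ^ 3" unfolding K_def by (simp add: power3_eq_cube)
  have nn: "0 \<le> K" unfolding K_def using C r1 by simp
  have "ennreal (prob (\<Union>a. \<Union>b. \<Union>c. E a b c)) \<le> ennreal K"
    using e3 unfolding K_def[symmetric] by (simp only: emeasure_eq_measure)
  then have "prob (\<Union>a. \<Union>b. \<Union>c. E a b c) \<le> K" using nn by (simp add: ennreal_le_iff)
  then show ?thesis using K by simp
qed

definition Gp :: "nat \<Rightarrow> 'a set set" where
  "Gp m = {X n -` B \<inter> space M | n B. n \<le> int m \<and> B \<in> sets borel}"
definition Gf :: "nat \<Rightarrow> 'a set set" where
  "Gf m = {X n -` B \<inter> space M | n B. n \<ge> int m + 1 \<and> B \<in> sets borel}"
definition KP :: "int \<Rightarrow> nat \<Rightarrow> (nat \<times> nat) set" where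
  "KP i m = {pq\<in>KK. int (fst pq) \<le> int m - i}"
definition KF :: "int \<Rightarrow> nat \<Rightarrow> (nat \<times> nat) set" where
  "KF i m = {pq\<in>KK. int (snd pq) \<le> i - int m + 1}"
definition YP :: "nat \<Rightarrow> int \<Rightarrow> 'a \<Rightarrow> real" where
  "YP m i \<omega> = min (INF pq\<in>KP i m. rt (\<lambda>n. X n \<omega>) i (fst pq) (snd pq)) t"
definition YF :: "nat \<Rightarrow> int \<Rightarrow> 'a \<Rightarrow> real" where
  "YF m i \<omega> = min (INF pq\<in>KF i m. rt (\<lambda>n. X n \<omega>) i (fst pq) (snd pq)) t"
definition BadP :: "nat \<Rightarrow> 'a set" where
  "BadP m = (\<Union>a. \<Union>b. \<Union>l. {\<omega>\<in>space M. rt (\<lambda>n. X n \<omega>) (- int a) (m + a + 1 + b) (l + 1) < t})"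
definition BadF :: "nat \<Rightarrow> nat \<Rightarrow> 'a set" where
  "BadF k m = (\<Union>a. \<Union>b. \<Union>p. {\<omega>\<in>space M. rt (\<lambda>n. X n \<omega>) (int k + int a) (p + 1) (k + a + 2 + b - m) < t})"

lemma Gp_sub: "Gp m \<subseteq> Pow (space M)" unfolding Gp_def by auto
lemma Gf_sub: "Gf m \<subseteq> Pow (space M)" unfolding Gf_def by auto
lemma Gp_ev: "Gp m \<subseteq> events" unfolding Gp_def by auto
lemma Gf_ev: "Gf m \<subseteq> events" unfolding Gf_def by auto

lemma X_meas_Gp: assumes "n \<le> int m" shows "X n \<in> borel_measurable (sigma (space M) (Gp m))"
proof (rule measurableI)
  fix A :: "real set" assume "A \<in> sets borel"
  then have "X n -` A \<inter> space M \<in> Gp m" unfolding Gp_def using assms by blast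
  then show "X n -` A \<inter> space (sigma (space M) (Gp m)) \<in> sets (sigma (space M) (Gp m))"
    using Gp_sub by (simp add: sets_measure_of)
qed auto

lemma X_meas_Gf: assumes "n \<ge> int m + 1" shows "X n \<in> borel_measurable (sigma (space M) (Gf m))"
proof (rule measurableI)
  fix A :: "real set" assume "A \<in> sets borel"
  then have "X n -` A \<inter> space M \<in> Gf m" unfolding Gf_def using assms by blast
  then show "X n -` A \<inter> space (sigma (space M) (Gf m)) \<in> sets (sigma (space M) (Gf m))"
    using Gf_sub by (simp add: sets_measure_of)
qed auto

lemma YP_meas: "YP m i \<in> borel_measurable (sigma (space M) (Gp m))"
proof -
  have "(\<lambda>\<omega>. INF pq\<in>KP i m. rt (\<lambda>n. X n \<omega>) i (fst pq) (snd pq)) \<in> borel_measurable (sigma (space M) (Gp m))"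
  proof (rule borel_measurable_cINF_real)
    show "countable (KP i m)" unfolding KP_def by (rule countable_subset[OF _ countable_KK]) auto
    fix pq assume pq: "pq \<in> KP i m"
    show "(\<lambda>\<omega>. rt (\<lambda>n. X n \<omega>) i (fst pq) (snd pq)) \<in> borel_measurable (sigma (space M) (Gp m))"
      using pq by (intro rt_meas_gen X_meas_Gp) (auto simp: KP_def KK_def II_def)
  qed
  then show ?thesis unfolding YP_def by measurable
qed

lemma YF_meas: "YF m i \<in> borel_measurable (sigma (space M) (Gf m))"
proof -
  have "(\<lambda>\<omega>. INF pq\<in>KF i m. rt (\<lambda>n. X n \<omega>) i (fst pq) (snd pq)) \<in> borel_measurable (sigma (space M) (Gf m))"
  proof (rule borel_measurable_cINF_real)
    show "countable (KF i m)" unfolding KF_def by (rule countable_subset[OF _ countable_KK]) auto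
    fix pq assume pq: "pq \<in> KF i m"
    show "(\<lambda>\<omega>. rt (\<lambda>n. X n \<omega>) i (fst pq) (snd pq)) \<in> borel_measurable (sigma (space M) (Gf m))"
      using pq by (intro rt_meas_gen X_meas_Gf) (auto simp: KF_def KK_def II_def)
  qed
  then show ?thesis unfolding YF_def by measurable
qed

lemma YP_eq: assumes w: "\<omega> \<in> space M - BadP m" and i: "i \<le> 0" and m: "m \<ge> 1"
  shows "Y i \<omega> = YP m i \<omega>"
  unfolding YP_def
proof (rule trunc_eq)
  show "\<omega> \<in> space M" using w by auto
  show "KP i m \<subseteq> KK" unfolding KP_def by auto
  show "KP i m \<noteq> {}" using i m unfolding KP_def KK_def by (auto intro!: exI[of _ "(1,1)"])
  fix pq assume pq: "pq \<in> KK - KP i m"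
  obtain p q where pq': "pq = (p, q)" by fastforce
  have p: "int p > int m - i" and q: "q \<ge> 1" using pq pq' unfolding KP_def KK_def by auto
  define a where "a = nat (- i)"
  define b where "b = p - (m + a + 1)"
  have ia: "i = - int a" using i unfolding a_def by simp
  have pb: "p = m + a + 1 + b" using p ia unfolding b_def by auto
  have qb: "q = (q - 1) + 1" using q by simp
  show "t \<le> rt (\<lambda>n. X n \<omega>) i (fst pq) (snd pq)"
  proof (rule ccontr)
    assume "\<not> ?thesis"
    then have "\<omega> \<in> {\<omega>\<in>space M. rt (\<lambda>n. X n \<omega>) (- int a) (m + a + 1 + b) ((q - 1) + 1) < t}"
      using w pq' ia pb qb by auto
    then have "\<omega> \<in> BadP m" unfolding BadP_def by blast
    then show False using w by auto
  qed
qed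

lemma YF_eq: assumes w: "\<omega> \<in> space M - BadF k m" and i: "i \<ge> int k" and m: "2 * m \<le> k"
  shows "Y i \<omega> = YF m i \<omega>"
  unfolding YF_def
proof (rule trunc_eq)
  show "\<omega> \<in> space M" using w by auto
  show "KF i m \<subseteq> KK" unfolding KF_def by auto
  have "(1,1) \<in> KF i m" using i m unfolding KF_def KK_def by auto
  then show "KF i m \<noteq> {}" by auto
  fix pq assume pq: "pq \<in> KK - KF i m"
  obtain p q where pq': "pq = (p, q)" by fastforce
  have q: "int q > i - int m + 1" and p: "p \<ge> 1" using pq pq' unfolding KF_def KK_def by auto
  define a where "a = nat (i - int k)"
  define b where "b = q - (k + a + 2 - m)"
  have ia: "i = int k + int a" using i unfolding a_def by simp
  have qb: "q = k + a + 2 + b - m" using q ia m unfolding b_def by auto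
  have pb: "p = (p - 1) + 1" using p by simp
  show "t \<le> rt (\<lambda>n. X n \<omega>) i (fst pq) (snd pq)"
  proof (rule ccontr)
    assume "\<not> ?thesis"
    then have "\<omega> \<in> {\<omega>\<in>space M. rt (\<lambda>n. X n \<omega>) (int k + int a) ((p - 1) + 1) (k + a + 2 + b - m) < t}"
      using w pq' ia pb qb by auto
    then have "\<omega> \<in> BadF k m" unfolding BadF_def by blast
    then show False using w by auto
  qed
qed

lemma BadP_ev: "BadP m \<in> events" unfolding BadP_def by measurable
lemma BadF_ev: "BadF k m \<in> events" unfolding BadF_def by measurable

lemma BadP_bound: "prob (BadP m) \<le> exp (- cc * real m) / (1 - rr) ^ 3"
  unfolding BadP_def
proof (rule triple_bound)
  fix a b l
  have "prob {\<omega>\<in>space M. rt (\<lambda>n. X n \<omega>) (- int a) (m + a + 1 + b) (l + 1) < t}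
      \<le> exp (- cc * (real (m + a + 1 + b) + real (l + 1)))" by (rule bad_bound) auto
  also have "\<dots> \<le> exp (- cc * real m) * rr ^ a * rr ^ b * rr ^ l" by (rule expo) auto
  finally show "prob {\<omega>\<in>space M. rt (\<lambda>n. X n \<omega>) (- int a) (m + a + 1 + b) (l + 1) < t}
      \<le> exp (- cc * real m) * rr ^ a * rr ^ b * rr ^ l" .
qed measurable

lemma BadF_bound: assumes "2 * m \<le> k" shows "prob (BadF k m) \<le> exp (- cc * real m) / (1 - rr) ^ 3"
  unfolding BadF_def
proof (rule triple_bound)
  fix a b p
  have "prob {\<omega>\<in>space M. rt (\<lambda>n. X n \<omega>) (int k + int a) (p + 1) (k + a + 2 + b - m) < t}
      \<le> exp (- cc * (real (p + 1) + real (k + a + 2 + b - m)))" by (rule bad_bound) (use assms in auto)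
  also have "\<dots> \<le> exp (- cc * real m) * rr ^ a * rr ^ b * rr ^ p" by (rule expo) (use assms in auto)
  finally show "prob {\<omega>\<in>space M. rt (\<lambda>n. X n \<omega>) (int k + int a) (p + 1) (k + a + 2 + b - m) < t}
      \<le> exp (- cc * real m) * rr ^ a * rr ^ b * rr ^ p" .
qed measurable

end


lemma comb_arith:
  fixes x x' y y' z z' n :: real
  assumes "\<bar>z - z'\<bar> \<le> n" "\<bar>x - x'\<bar> \<le> n" "\<bar>y - y'\<bar> \<le> n" "z' = x' * y'"
    "0 \<le> x" "x \<le> 1" "0 \<le> y'" "y' \<le> 1"
  shows "\<bar>z - x * y\<bar> \<le> 3 * n"
proof -
  have e: "x * y - x' * y' = x * (y - y') + y' * (x - x')" by (simp add: algebra_simps)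
  have "\<bar>x * (y - y')\<bar> \<le> \<bar>y - y'\<bar>" using assms(5,6) by (simp add: abs_mult mult_left_le_one_le)
  moreover have "\<bar>y' * (x - x')\<bar> \<le> \<bar>x - x'\<bar>" using assms(7,8) by (simp add: abs_mult mult_left_le_one_le)
  ultimately have "\<bar>x * y - x' * y'\<bar> \<le> 2 * n" using e assms(2,3) by linarith
  then show ?thesis using assms(1,4) by linarith
qed

context mixset begin

lemma Y_meas[measurable]: "Y i \<in> borel_measurable M"
proof -
  have m0: "(\<lambda>\<omega> n. X n \<omega>) \<in> measurable M (Pi\<^sub>M UNIV (\<lambda>_. borel))"
    by (rule measurable_PiM_single') auto
  have "(\<lambda>\<omega>. Gv (\<lambda>n. X n \<omega>) i) \<in> borel_measurable M"
    using measurable_compose[OF measurable_compose[OF m0 Gv_meas] measurable_component_singleton[of i UNIV]]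
    by simp
  then show ?thesis by (rule measurable_cong[THEN iffD1, rotated]) (simp add: Y_Gv)
qed

lemma gen_ev: "gen_sets M Y I \<subseteq> events"
  unfolding gen_sets_def by (rule sets.sigma_sets_subset) auto

lemma indep_pf:
  assumes A: "A' \<in> sigma_sets (space M) (Gp m)" and B: "B' \<in> sigma_sets (space M) (Gf m)"
  shows "prob (A' \<inter> B') = prob A' * prob B'"
proof -
  define E where "E = (\<lambda>n. {X n -` A \<inter> space M | A. A \<in> sets (borel :: real measure)})"
  define I where "I = (\<lambda>b::bool. if b then {..int m} else {int m + 1..})"
  have ind0: "indep_sets E UNIV" using indep unfolding indep_vars_def2 E_def by auto
  have ind: "indep_sets E (\<Union>b. I b)" by (rule indep_sets_mono_index[OF _ ind0]) auto
  have ist: "Int_stable (E n)" for n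
    unfolding Int_stable_def E_def
  proof (safe)
    fix A B :: "real set" assume "A \<in> sets borel" "B \<in> sets borel"
    then show "\<exists>C. X n -` A \<inter> space M \<inter> (X n -` B \<inter> space M) = X n -` C \<inter> space M \<and> C \<in> sets borel"
      by (intro exI[of _ "A \<inter> B"]) auto
  qed
  have dj: "disjoint_family_on I UNIV" unfolding disjoint_family_on_def I_def by auto
  have ind2: "indep_sets (\<lambda>b. sigma_sets (space M) (\<Union>n\<in>I b. E n)) UNIV"
    by (rule indep_sets_collect_sigma[OF ind ist dj])
  have eP: "(\<Union>n\<in>I True. E n) = Gp m" unfolding I_def E_def Gp_def by auto
  have eF: "(\<Union>n\<in>I False. E n) = Gf m" unfolding I_def E_def Gf_def by auto
  define C where "C = (\<lambda>b::bool. if b then A' else B')"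
  have "prob (\<Inter>b\<in>UNIV. C b) = (\<Prod>b\<in>UNIV. prob (C b))"
  proof (rule indep_setsD[OF ind2])
    show "\<forall>b\<in>UNIV. C b \<in> sigma_sets (space M) (\<Union>n\<in>I b. E n)"
      using A B eP eF unfolding C_def by auto
  qed auto
  moreover have "(\<Inter>b\<in>UNIV. C b) = A' \<inter> B'" unfolding C_def by (auto simp: UNIV_bool)
  moreover have "(\<Prod>b\<in>UNIV. prob (C b)) = prob A' * prob B'" unfolding C_def by (simp add: UNIV_bool)
  ultimately show ?thesis by simp
qed

lemma approx:
  assumes "E \<in> events" "F \<in> events" "N \<in> events" "E \<inter> (space M - N) = F \<inter> (space M - N)"
  shows "\<bar>prob E - prob F\<bar> \<le> prob N"
proof -
  have E: "E \<subseteq> space M" "F \<subseteq> space M" using assms(1,2) sets.sets_into_space by auto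
  have "E \<subseteq> F \<union> N" using assms(4) E by blast
  then have "prob E \<le> prob (F \<union> N)" using assms by (intro finite_measure_mono) auto
  also have "\<dots> \<le> prob F + prob N" using assms by (intro measure_Un_le) auto
  finally have 1: "prob E \<le> prob F + prob N" .
  have "F \<subseteq> E \<union> N" using assms(4) E by blast
  then have "prob F \<le> prob (E \<union> N)" using assms by (intro finite_measure_mono) auto
  also have "\<dots> \<le> prob E + prob N" using assms by (intro measure_Un_le) auto
  finally have 2: "prob F \<le> prob E + prob N" .
  show ?thesis using 1 2 by linarith
qed

lemma transferP:
  assumes A: "A \<in> gen_sets M Y {..0}" and m: "m \<ge> 1"
  shows "\<exists>A'\<in>sigma_sets (space M) (Gp m). A \<inter> (space M - BadP m) = A' \<inter> (space M - BadP m)"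
proof (rule sigma_transfer[OF A[unfolded gen_sets_def]])
  show "sigma_algebra (space M) (sigma_sets (space M) (Gp m))" by (rule sigma_algebra_sigma_sets[OF Gp_sub])
  fix g assume "g \<in> {Y i -` B \<inter> space M |i B. i \<in> {..0} \<and> B \<in> sets borel}"
  then obtain i B where g: "g = Y i -` B \<inter> space M" "i \<le> 0" "B \<in> sets borel" by auto
  have "YP m i -` B \<inter> space (sigma (space M) (Gp m)) \<in> sets (sigma (space M) (Gp m))"
    using YP_meas g(3) by (rule measurable_sets)
  then have in1: "YP m i -` B \<inter> space M \<in> sigma_sets (space M) (Gp m)"
    using Gp_sub by (simp add: sets_measure_of)
  have "g \<inter> (space M - BadP m) = (YP m i -` B \<inter> space M) \<inter> (space M - BadP m)"
    using YP_eq[OF _ g(2) m] unfolding g(1) by auto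
  then show "\<exists>g'\<in>sigma_sets (space M) (Gp m). g \<inter> (space M - BadP m) = g' \<inter> (space M - BadP m)"
    using in1 by blast
qed auto

lemma transferF:
  assumes B: "B \<in> gen_sets M Y {int k..}" and m: "2 * m \<le> k"
  shows "\<exists>B'\<in>sigma_sets (space M) (Gf m). B \<inter> (space M - BadF k m) = B' \<inter> (space M - BadF k m)"
proof (rule sigma_transfer[OF B[unfolded gen_sets_def]])
  show "sigma_algebra (space M) (sigma_sets (space M) (Gf m))" by (rule sigma_algebra_sigma_sets[OF Gf_sub])
  fix g assume "g \<in> {Y i -` B \<inter> space M |i B. i \<in> {int k..} \<and> B \<in> sets borel}"
  then obtain i B where g: "g = Y i -` B \<inter> space M" "i \<ge> int k" "B \<in> sets borel" by auto
  have "YF m i -` B \<inter> space (sigma (space M) (Gf m)) \<in> sets (sigma (space M) (Gf m))"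
    using YF_meas g(3) by (rule measurable_sets)
  then have in1: "YF m i -` B \<inter> space M \<in> sigma_sets (space M) (Gf m)"
    using Gf_sub by (simp add: sets_measure_of)
  have "g \<inter> (space M - BadF k m) = (YF m i -` B \<inter> space M) \<inter> (space M - BadF k m)"
    using YF_eq[OF _ g(2) m] unfolding g(1) by auto
  then show "\<exists>g'\<in>sigma_sets (space M) (Gf m). g \<inter> (space M - BadF k m) = g' \<inter> (space M - BadF k m)"
    using in1 by blast
qed auto

lemma mix_pair:
  assumes k: "k \<ge> 2" and A: "A \<in> gen_sets M Y {..0}" and B: "B \<in> gen_sets M Y {int k..}"
  shows "\<bar>prob (A \<inter> B) - prob A * prob B\<bar> \<le> 6 * exp (- cc * real (k div 2)) / (1 - rr) ^ 3"
proof -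
  define m where "m = k div 2"
  have m1: "m \<ge> 1" and m2: "2 * m \<le> k" using k unfolding m_def by auto
  obtain A' where A': "A' \<in> sigma_sets (space M) (Gp m)" "A \<inter> (space M - BadP m) = A' \<inter> (space M - BadP m)"
    using transferP[OF A m1] by blast
  obtain B' where B': "B' \<in> sigma_sets (space M) (Gf m)" "B \<inter> (space M - BadF k m) = B' \<inter> (space M - BadF k m)"
    using transferF[OF B m2] by blast
  define N where "N = BadP m \<union> BadF k m"
  have Nev: "N \<in> events" unfolding N_def using BadP_ev BadF_ev by auto
  have Aev: "A \<in> events" and Bev: "B \<in> events" using A B gen_ev by auto
  have A'ev: "A' \<in> events" using A' Gp_ev by (meson sets.sigma_sets_subset subsetD)
  have B'ev: "B' \<in> events" using B' Gf_ev by (meson sets.sigma_sets_subset subsetD)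
  have eA: "A \<inter> (space M - N) = A' \<inter> (space M - N)" using A'(2) unfolding N_def by blast
  have eB: "B \<inter> (space M - N) = B' \<inter> (space M - N)" using B'(2) unfolding N_def by blast
  have eAB: "(A \<inter> B) \<inter> (space M - N) = (A' \<inter> B') \<inter> (space M - N)" using eA eB by blast
  have d1: "\<bar>prob (A \<inter> B) - prob (A' \<inter> B')\<bar> \<le> prob N" using Aev Bev A'ev B'ev Nev eAB by (intro approx) auto
  have d2: "\<bar>prob A - prob A'\<bar> \<le> prob N" using Aev A'ev Nev eA by (intro approx) auto
  have d3: "\<bar>prob B - prob B'\<bar> \<le> prob N" using Bev B'ev Nev eB by (intro approx) auto
  have "\<bar>prob (A \<inter> B) - prob A * prob B\<bar> \<le> 3 * prob N"
    by (rule comb_arith[OF d1 d2 d3 indep_pf[OF A'(1) B'(1)]]) auto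
  also have "prob N \<le> prob (BadP m) + prob (BadF k m)" unfolding N_def using BadP_ev BadF_ev by (rule measure_Un_le)
  also have "\<dots> \<le> exp (- cc * real m) / (1 - rr) ^ 3 + exp (- cc * real m) / (1 - rr) ^ 3"
    using BadP_bound BadF_bound[OF m2] by (rule add_mono)
  finally show ?thesis unfolding m_def by simp
qed

lemma mix_bound:
  assumes k: "k \<ge> 2"
  shows "mixing_coeff M Y (int k) \<le> 6 * exp (- cc * real (k div 2)) / (1 - rr) ^ 3"
  unfolding mixing_coeff_def
proof (rule cSUP_least)
  show "gen_sets M Y {..0} \<times> gen_sets M Y {int k..} \<noteq> {}"
    unfolding gen_sets_def using sigma_sets.Empty by blast
  fix p assume "p \<in> gen_sets M Y {..0} \<times> gen_sets M Y {int k..}"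
  then show "\<bar>prob (fst p \<inter> snd p) - prob (fst p) * prob (snd p)\<bar> \<le> 6 * exp (- cc * real (k div 2)) / (1 - rr) ^ 3"
    using mix_pair[OF k] by (cases p) auto
qed

lemma mix_nonneg: "mixing_coeff M Y k \<ge> 0"
  unfolding mixing_coeff_def
proof -
  let ?f = "\<lambda>p. \<bar>prob (fst p \<inter> snd p) - prob (fst p) * prob (snd p)\<bar>"
  let ?S = "gen_sets M Y {..0} \<times> gen_sets M Y {k..}"
  have in0: "({}, {}) \<in> ?S" unfolding gen_sets_def using sigma_sets.Empty by blast
  have bdd: "bdd_above (?f ` ?S)"
  proof (rule bdd_aboveI[of _ 1])
    fix x assume "x \<in> ?f ` ?S"
    then obtain a b where x: "x = \<bar>prob (a \<inter> b) - prob a * prob b\<bar>" by auto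
    have "0 \<le> prob (a \<inter> b)" "prob (a \<inter> b) \<le> 1" "0 \<le> prob a * prob b" "prob a * prob b \<le> 1"
      by (auto intro!: mult_le_one)
    then show "x \<le> 1" unfolding x by linarith
  qed
  have "?f ({}, {}) \<le> (SUP p\<in>?S. ?f p)" by (rule cSUP_upper[OF in0 bdd])
  then show "0 \<le> (SUP p\<in>?S. ?f p)" by simp
qed

end


lemma Q_lim: fixes c :: real assumes c: "c > 0"
  shows "(\<lambda>k::nat. exp (- c * real k) * real k ^ N) \<longlonglongrightarrow> 0"
proof -
  have L: "((\<lambda>x::real. x ^ N / exp x) \<longlongrightarrow> 0) at_top" by (rule tendsto_power_div_exp_0)
  have F: "filterlim (\<lambda>k::nat. c * real k) at_top sequentially"
    by (rule filterlim_tendsto_pos_mult_at_top[OF tendsto_const c filterlim_real_sequentially])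
  have "(\<lambda>k::nat. (c * real k) ^ N / exp (c * real k)) \<longlonglongrightarrow> 0"
    by (rule filterlim_compose[OF L F])
  then have "(\<lambda>k::nat. (1 / c ^ N) * ((c * real k) ^ N / exp (c * real k))) \<longlonglongrightarrow> (1 / c ^ N) * 0"
    by (intro tendsto_mult tendsto_const)
  moreover have "(\<lambda>k::nat. (1 / c ^ N) * ((c * real k) ^ N / exp (c * real k))) = (\<lambda>k::nat. exp (- c * real k) * real k ^ N)"
    using c by (auto simp: power_mult_distrib exp_minus field_simps)
  ultimately show ?thesis by simp
qed

context mixset begin

lemma asym:
  "(\<lambda>k::nat. mixing_coeff M Y (int k)) \<longlonglongrightarrow> 0 \<and>
   (\<lambda>k::nat. mixing_coeff M Y (int k)) \<in> o(\<lambda>k. real k powr (2 - \<gamma>))"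
proof -
  define K where "K = 6 * exp (cc / 2) / (1 - rr) ^ 3"
  define N where "N = nat \<lceil>\<gamma>\<rceil>"
  define Q where "Q = (\<lambda>k::nat. K * (exp (- (cc / 2) * real k) * real k ^ N))"
  have r1: "1 - rr > 0" using rr by simp
  have K0: "K \<ge> 0" unfolding K_def using r1 by simp
  have Qlim: "Q \<longlonglongrightarrow> 0" unfolding Q_def using Q_lim[of "cc/2" N] cc_pos
    by (intro tendsto_mult_right_zero) auto
  have bnd: "mixing_coeff M Y (int k) \<le> K * exp (- (cc / 2) * real k)" if k: "k \<ge> 2" for k
  proof -
    have "real k \<le> 2 * real (k div 2) + 1" by linarith
    then have "cc * real k \<le> cc * (2 * real (k div 2) + 1)" using cc_pos by (intro mult_left_mono) auto
    then have "- cc * real (k div 2) \<le> cc / 2 + (- (cc / 2) * real k)" by (simp add: field_simps)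
    then have "exp (- cc * real (k div 2)) \<le> exp (cc / 2) * exp (- (cc / 2) * real k)"
      by (simp add: exp_add[symmetric])
    then have "6 * exp (- cc * real (k div 2)) / (1 - rr) ^ 3 \<le> 6 * (exp (cc / 2) * exp (- (cc / 2) * real k)) / (1 - rr) ^ 3"
      using r1 by (intro divide_right_mono mult_left_mono) auto
    then show ?thesis using mix_bound[OF k] unfolding K_def by simp
  qed
  have powle: "real k powr (\<gamma> - 2) \<le> real k ^ N" if "k \<ge> 1" for k :: nat
  proof -
    have "real k powr (\<gamma> - 2) \<le> real k powr (real N)"
      using that unfolding N_def by (intro powr_mono) (auto, linarith)
    also have "\<dots> = real k ^ N" using that by (simp add: powr_realpow)
    finally show ?thesis .
  qed
  have ev1: "eventually (\<lambda>k. 0 \<le> mixing_coeff M Y (int k)) sequentially" using mix_nonneg by simp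
  have ev2: "eventually (\<lambda>k. mixing_coeff M Y (int k) \<le> Q k) sequentially"
    using eventually_ge_at_top[of 2]
  proof eventually_elim
    case (elim k)
    have "exp (- (cc / 2) * real k) \<le> exp (- (cc / 2) * real k) * real k ^ N"
      using elim by (intro mult_le_cancel_left1[THEN iffD2]) (auto simp: one_le_power)
    then have "K * exp (- (cc / 2) * real k) \<le> Q k" unfolding Q_def using K0 by (intro mult_left_mono) auto
    then show ?case using bnd[OF elim] by linarith
  qed
  have lim1: "(\<lambda>k::nat. mixing_coeff M Y (int k)) \<longlonglongrightarrow> 0"
    by (rule tendsto_sandwich[OF ev1 ev2 tendsto_const Qlim])
  have ev3: "eventually (\<lambda>k. 0 \<le> mixing_coeff M Y (int k) / real k powr (2 - \<gamma>)) sequentially"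
    using mix_nonneg by simp
  have ev4: "eventually (\<lambda>k. mixing_coeff M Y (int k) / real k powr (2 - \<gamma>) \<le> Q k) sequentially"
    using eventually_ge_at_top[of 2]
  proof eventually_elim
    case (elim k)
    have kp: "real k > 0" using elim by simp
    have "mixing_coeff M Y (int k) / real k powr (2 - \<gamma>) = mixing_coeff M Y (int k) * real k powr (\<gamma> - 2)"
    proof -
      have "inverse (real k powr (2 - \<gamma>)) = real k powr (- (2 - \<gamma>))" by (rule powr_minus[symmetric])
      then show ?thesis by (simp add: divide_inverse)
    qed
    also have "\<dots> \<le> (K * exp (- (cc / 2) * real k)) * real k ^ N"
      using bnd[OF elim] powle[of k] elim mix_nonneg K0 by (intro mult_mono) auto
    also have "\<dots> = Q k" unfolding Q_def by simp
    finally show ?case .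
  qed
  have lim2: "(\<lambda>k::nat. mixing_coeff M Y (int k) / real k powr (2 - \<gamma>)) \<longlonglongrightarrow> 0"
    by (rule tendsto_sandwich[OF ev3 ev4 tendsto_const Qlim])
  have "(\<lambda>k::nat. mixing_coeff M Y (int k)) \<in> o(\<lambda>k. real k powr (2 - \<gamma>))"
    by (rule smalloI_tendsto[OF lim2]) (use eventually_ge_at_top[of "1::nat"] in \<open>auto elim: eventually_mono\<close>)
  then show ?thesis using lim1 by simp
qed

end

theorem mainTheorem12:
  fixes M :: "'a measure" and X :: "int \<Rightarrow> 'a \<Rightarrow> real" and \<gamma> t :: real
  assumes "prob_space M"
    and "\<And>i. X i \<in> borel_measurable M"
    and "prob_space.indep_vars M (\<lambda>_. borel) X UNIV"
    and "\<And>i. distr M borel (X i) = distr M borel (X 0)"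
    and "\<And>i \<omega>. \<omega> \<in> space M \<Longrightarrow> X i \<omega> \<ge> 0"
    and "integrable M (X 0)" and "integral\<^sup>L M (X 0) = 1"
    and "\<gamma> \<ge> 2" and "integrable M (\<lambda>\<omega>. X 0 \<omega> powr \<gamma>)"
    and "t < 1"
  shows "(let Y = (\<lambda>i \<omega>. min (Tfun (\<lambda>n. X n \<omega>) i) t) in
           distr M (Pi\<^sub>M UNIV (\<lambda>_. borel)) (\<lambda>\<omega> i. Y (i + 1) \<omega>)
             = distr M (Pi\<^sub>M UNIV (\<lambda>_. borel)) (\<lambda>\<omega> i. Y i \<omega>)
         \<and> (\<lambda>k::nat. mixing_coeff M Y (int k)) \<longlonglongrightarrow> 0
         \<and> (\<lambda>k::nat. mixing_coeff M Y (int k)) \<in> o(\<lambda>k. real k powr (2 - \<gamma>)))"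
proof -
  interpret mixset M X \<gamma> t
    by (intro mixset.intro mixset_axioms.intro) (use assms in auto)
  have Yeq: "(\<lambda>i \<omega>. min (Tfun (\<lambda>n. X n \<omega>) i) t) = Y" by (simp add: Y_def)
  show ?thesis unfolding Let_def Yeq using stationary asym by simp
qed

end
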